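(* Let $A$ and $B$ be disjoint finite alphabets, and let $\rho_A$ and $\rho_B$ be equivalence relations on $A^*$ and $B^*$ respectively, each having infinitely many equivalence classes. Then the language $L(\rho_A,\rho_B)=\{u_1v_1u_2v_2 : (u_1,u_2)\in\rho_A,\ (v_1,v_2)\in\rho_B\}$ (where $u_1,u_2\in A^*$ and $v_1,v_2\in B^*$) is not context-free. *)

theory Defs
  imports Main
begin

text \<open>Context-free grammars. Nonterminals are natural numbers (any finite grammar
  can be renamed to use natural-number nonterminals); terminals are of type 't.\<close>

datatype ('n, 't) sym = NT 'n | Tm 't

type_synonym 't cfg_prods = "(nat \<times> (nat, 't) sym list) set"

definition derive1 :: "'t cfg_prods \<Rightarrow> (nat, 't) sym list \<Rightarrow> (nat, 't) sym list \<Rightarrow> bool" where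
  "derive1 P u v \<longleftrightarrow>
     (\<exists>l r X \<alpha>. (X, \<alpha>) \<in> P \<and> u = l @ [NT X] @ r \<and> v = l @ \<alpha> @ r)"

definition cfg_lang :: "'t cfg_prods \<Rightarrow> nat \<Rightarrow> 't list set" where
  "cfg_lang P S = {w. (derive1 P)\<^sup>*\<^sup>* [NT S] (map Tm w)}"

definition context_free :: "'t list set \<Rightarrow> bool" where
  "context_free L \<longleftrightarrow> (\<exists>P S. finite P \<and> cfg_lang P S = L)"

definition L_rho :: "('a list \<times> 'a list) set \<Rightarrow> ('a list \<times> 'a list) set \<Rightarrow> 'a list set" where
  "L_rho \<rho>A \<rho>B = {u1 @ v1 @ u2 @ v2 | u1 u2 v1 v2. (u1, u2) \<in> \<rho>A \<and> (v1, v2) \<in> \<rho>B}"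

end

theory Submission
  imports Defs "HOL-Library.Sublist"
begin


lemma tw_sep: "set X \<subseteq> S \<Longrightarrow> (Y = [] \<or> hd Y \<notin> S) \<Longrightarrow> takeWhile (\<lambda>c. c \<in> S) (X @ Y) = X"
  by (cases Y) (auto simp: takeWhile_append subset_iff)

lemma sep: "X1 @ Y1 = X2 @ Y2 \<Longrightarrow> set X1 \<subseteq> S \<Longrightarrow> set X2 \<subseteq> S \<Longrightarrow> (Y1 = [] \<or> hd Y1 \<notin> S)
  \<Longrightarrow> (Y2 = [] \<or> hd Y2 \<notin> S) \<Longrightarrow> X1 = X2 \<and> Y1 = Y2"
  by (metis append_eq_append_conv tw_sep)

lemma hd_notin: "set Y \<subseteq> B \<Longrightarrow> A \<inter> B = {} \<Longrightarrow> Y = [] \<or> hd Y \<notin> A"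
  by (cases Y) auto

lemma hd_in: "Y \<noteq> [] \<Longrightarrow> set Y \<subseteq> B \<Longrightarrow> A \<inter> B = {} \<Longrightarrow> hd (Y @ Z) \<notin> A"
  by (cases Y) auto

lemma parse:
  assumes AB: "A \<inter> B = {}"
    and eq: "u1 @ v1 @ u2 @ v2 = P1 @ P2 @ P3 @ P4"
    and s: "set u1 \<subseteq> A" "set v1 \<subseteq> B" "set u2 \<subseteq> A" "set v2 \<subseteq> B"
    and sp: "set P1 \<subseteq> A" "set P2 \<subseteq> B" "set P3 \<subseteq> A" "set P4 \<subseteq> B"
    and ne: "P1 \<noteq> []" "P2 \<noteq> []" "P3 \<noteq> []" "P4 \<noteq> []"
  shows "u1 = P1 \<and> v1 = P2 \<and> u2 = P3 \<and> v2 = P4"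
proof -
  have BA: "B \<inter> A = {}" using AB by blast
  have h2: "P2 @ P3 @ P4 = [] \<or> hd (P2 @ P3 @ P4) \<notin> A" using hd_in[OF ne(2) sp(2) AB] by blast
  have h3: "P3 @ P4 = [] \<or> hd (P3 @ P4) \<notin> B" using hd_in[OF ne(3) sp(3) BA] by blast
  have h4: "P4 = [] \<or> hd P4 \<notin> A" using hd_in[OF ne(4) sp(4) AB, of "[]"] by simp
  have v1: "v1 \<noteq> []"
  proof
    assume "v1 = []"
    then have "(u1 @ u2) @ v2 = P1 @ (P2 @ P3 @ P4)" using eq by simp
    from sep[OF this, of A] s sp hd_notin[OF s(4) AB] h2
    have "v2 = P2 @ P3 @ P4" by auto
    then show False using s(4) sp(3) ne(3) AB by (cases P3) auto
  qed
  have "v1 @ u2 @ v2 = [] \<or> hd (v1 @ u2 @ v2) \<notin> A" using hd_in[OF v1 s(2) AB] by blast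
  then have 1: "u1 = P1 \<and> v1 @ u2 @ v2 = P2 @ P3 @ P4"
    using sep[OF eq, of A] s sp h2 by auto
  have u2: "u2 \<noteq> []"
  proof
    assume "u2 = []"
    then have "(v1 @ v2) @ [] = P2 @ (P3 @ P4)" using 1 by simp
    from sep[OF this, of B] s sp h3 ne
    show False by auto
  qed
  have "u2 @ v2 = [] \<or> hd (u2 @ v2) \<notin> B" using hd_in[OF u2 s(3) BA] by blast
  then have 2: "v1 = P2 \<and> u2 @ v2 = P3 @ P4"
    using sep[of v1 "u2 @ v2" P2 "P3 @ P4" B] 1 s sp h3 by auto
  have 3: "u2 = P3 \<and> v2 = P4"
    using sep[of u2 v2 P3 P4 A] 2 s sp hd_notin[of v2 B A] h4 AB
    by auto
  show ?thesis using 1 2 3 by simp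
qed

lemma pre: "X @ Y = Q @ R \<Longrightarrow> set Q \<subseteq> S \<Longrightarrow> Y \<noteq> [] \<Longrightarrow> hd Y \<notin> S \<Longrightarrow> length X \<le> length Q \<Longrightarrow> X = Q"
proof -
  assume a: "X @ Y = Q @ R" "set Q \<subseteq> S" "Y \<noteq> []" "hd Y \<notin> S" "length X \<le> length Q"
  from a(1) obtain us where "X = Q @ us \<and> us @ Y = R \<or> X @ us = Q \<and> Y = us @ R"
    unfolding append_eq_append_conv2 by blast
  then show "X = Q"
  proof
    assume "X = Q @ us \<and> us @ Y = R" then show ?thesis using a(5) by simp
  next
    assume h: "X @ us = Q \<and> Y = us @ R"
    show ?thesis
    proof (cases us)
      case Nil then show ?thesis using h by simp
    next
      case (Cons c cs)
      then have "hd Y = c" "c \<in> set Q" using h by auto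
      then show ?thesis using a(2,4) by auto
    qed
  qed
qed

lemma suf: "Y @ X = R @ Q \<Longrightarrow> set Q \<subseteq> S \<Longrightarrow> Y \<noteq> [] \<Longrightarrow> last Y \<notin> S \<Longrightarrow> length X \<le> length Q \<Longrightarrow> X = Q"
proof -
  assume a: "Y @ X = R @ Q" "set Q \<subseteq> S" "Y \<noteq> []" "last Y \<notin> S" "length X \<le> length Q"
  have "rev X @ rev Y = rev Q @ rev R" using a(1) by (metis rev_append)
  from pre[OF this, of S] a have "rev X = rev Q" by (simp add: hd_rev)
  then show ?thesis by simp
qed

lemma prefix_split: "xs @ ys = xs' @ ys' \<Longrightarrow> length xs' \<le> length xs \<Longrightarrow> \<exists>zs. xs = xs' @ zs"
proof -
  assume a: "xs @ ys = xs' @ ys'" "length xs' \<le> length xs"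
  from a(1) obtain us where "xs = xs' @ us \<and> us @ ys = ys' \<or> xs @ us = xs' \<and> ys = us @ ys'"
    unfolding append_eq_append_conv2 by blast
  then show ?thesis
  proof
    assume "xs @ us = xs' \<and> ys = us @ ys'"
    then have "us = []" "xs = xs'" using a(2) by auto
    then show ?thesis by auto
  qed blast
qed

lemma suffix_split: "xs @ ys = xs' @ ys' \<Longrightarrow> length ys' \<le> length ys \<Longrightarrow> \<exists>zs. ys = zs @ ys'"
proof -
  assume a: "xs @ ys = xs' @ ys'" "length ys' \<le> length ys"
  have "rev ys @ rev xs = rev ys' @ rev xs'" using a(1) by (metis rev_append)
  from prefix_split[OF this] a(2) obtain zs where "rev ys = rev ys' @ zs" by auto
  then have "ys = rev zs @ ys'" by (metis rev_append rev_rev_ident)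
  then show ?thesis by blast
qed

lemma subseq_set: "subseq xs ys \<Longrightarrow> set xs \<subseteq> set ys"
  by (induct rule: list_emb.induct) auto


lemma hl: "Y \<noteq> [] \<Longrightarrow> set Y \<subseteq> B \<Longrightarrow> A \<inter> B = {} \<Longrightarrow> hd Y \<notin> A"
  by (cases Y) auto
lemma ll: "Y \<noteq> [] \<Longrightarrow> set Y \<subseteq> B \<Longrightarrow> A \<inter> B = {} \<Longrightarrow> last Y \<notin> A"
  using last_in_set by blast

lemma comb:
  assumes AB: "A \<inter> B = {}"
    and su: "set u0 \<subseteq> A" "set v0 \<subseteq> B" and la: "length u0 > p" "length v0 > p"
    and w: "u0 @ v0 @ u0 @ v0 = x @ u @ y @ v @ z" and lm: "length (u @ y @ v) \<le> p"
    and eq: "x @ y @ z = u1 @ v1 @ u2 @ v2"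
    and s: "set u1 \<subseteq> A" "set v1 \<subseteq> B" "set u2 \<subseteq> A" "set v2 \<subseteq> B"
  shows "(u1 = u0 \<or> u2 = u0) \<and> (v1 = v0 \<or> v2 = v0)"
proof -
  have BA: "B \<inter> A = {}" using AB by blast
  have "subseq y (u @ y @ v)" by (simp add: subseq_drop_many subseq_rev_drop_many)
  then have "subseq (x @ y @ z) (x @ (u @ y @ v) @ z)"
    by (intro list_emb_append_mono) (auto intro: list_emb_append_mono)
  then have "subseq (x @ y @ z) (u0 @ v0 @ u0 @ v0)" using w by simp
  then obtain P1 P2 P3 P4 where P: "x @ y @ z = P1 @ P2 @ P3 @ P4" "subseq P1 u0" "subseq P2 v0"
    "subseq P3 u0" "subseq P4 v0"
    by (metis subseq_appendE)
  have len: "length (u0 @ v0 @ u0 @ v0) = length (x @ u @ y @ v @ z)" using w by simp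
  have lP: "length P1 \<le> length u0" "length P2 \<le> length v0" "length P3 \<le> length u0" "length P4 \<le> length v0"
    using P list_emb_length by blast+
  have lP2: "length (x @ y @ z) = length (P1 @ P2 @ P3 @ P4)" using P(1) by simp
  have L: "length P1 + length P2 + length P3 + length P4 + length u + length v = 2*length u0 + 2*length v0"
    using len lP2 by simp
  have lm': "length u + length y + length v \<le> p" using lm by simp
  have "0 < length P1 \<and> 0 < length P2 \<and> 0 < length P3 \<and> 0 < length P4"
    using L lm' lP la by (intro conjI; linarith)
  then have ne: "P1 \<noteq> []" "P2 \<noteq> []" "P3 \<noteq> []" "P4 \<noteq> []" by auto
  have sp: "set P1 \<subseteq> A" "set P2 \<subseteq> B" "set P3 \<subseteq> A" "set P4 \<subseteq> B"
    using P subseq_set su by blast+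
  have pa: "u1 = P1 \<and> v1 = P2 \<and> u2 = P3 \<and> v2 = P4"
    using parse[OF AB _ s sp ne] P(1) eq by metis
  have nv1: "v1 \<noteq> []" and nu2: "u2 \<noteq> []" using pa ne by auto
  have l12: "length u1 \<le> length u0" "length v1 \<le> length v0" "length u2 \<le> length u0" "length v2 \<le> length v0"
    using pa lP by auto
  have preA: "u1 = u0" if hR: "\<exists>R. x @ y @ z = u0 @ R"
  proof -
    obtain R where "x @ y @ z = u0 @ R" using hR by blast
    then have "u1 @ (v1 @ u2 @ v2) = u0 @ R" using eq by simp
    from pre[OF this su(1) _ _ l12(1)] show ?thesis using nv1 hl[OF nv1 s(2) AB] by simp
  qed
  have preB: "v1 = v0" if hR: "\<exists>R. x @ y @ z = u0 @ v0 @ R"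
  proof -
    obtain R where R: "x @ y @ z = u0 @ v0 @ R" using hR by blast
    then have "u1 = u0" using preA by blast
    then have "v1 @ (u2 @ v2) = v0 @ R" using eq R by simp
    from pre[OF this su(2) _ _ l12(2)] show ?thesis using nu2 hl[OF nu2 s(3) BA] by simp
  qed
  have sufB: "v2 = v0" if hR: "\<exists>R. x @ y @ z = R @ v0"
  proof -
    obtain R where "x @ y @ z = R @ v0" using hR by blast
    then have "(u1 @ v1 @ u2) @ v2 = R @ v0" using eq by simp
    from suf[OF this su(2) _ _ l12(4)] show ?thesis using nu2 ll[OF nu2 s(3) BA] by simp
  qed
  have sufA: "u2 = u0" if hR: "\<exists>R. x @ y @ z = R @ u0 @ v0"
  proof -
    obtain R where R: "x @ y @ z = R @ u0 @ v0" using hR by blast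
    then have "v2 = v0" using sufB by (metis append.assoc)
    then have "(u1 @ v1) @ u2 = R @ u0" using eq R by simp
    from suf[OF this su(1) _ _ l12(3)] show ?thesis using nv1 ll[OF nv1 s(2) AB] by simp
  qed
  show ?thesis
  proof (cases "length x < length u0")
    case True
    have "(x @ u @ y @ v) @ z = (u0 @ v0) @ (u0 @ v0)" using w by simp
    moreover have "length (u0 @ v0) \<le> length z" using len lm la True by simp
    ultimately obtain z0 where "z = z0 @ u0 @ v0" using suffix_split by (metis append.assoc)
    then have "x @ y @ z = (x @ y @ z0) @ u0 @ v0" by simp
    then have "u2 = u0" "v2 = v0" using sufA sufB by (blast, metis append.assoc)
    then show ?thesis by simp
  next
    case False
    show ?thesis
    proof (cases "length x < length u0 + length v0")
      case True
      have "x @ (u @ y @ v @ z) = u0 @ (v0 @ u0 @ v0)" using w by simp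
      then obtain x0 where "x = u0 @ x0" using prefix_split False by (metis not_less)
      then have 1: "u1 = u0" using preA by simp
      have "(x @ u @ y @ v) @ z = (u0 @ v0 @ u0) @ v0" using w by simp
      moreover have "length v0 \<le> length z" using len lm la True by simp
      ultimately obtain z0 where "z = z0 @ v0" using suffix_split by metis
      then have "v2 = v0" using sufB by simp
      then show ?thesis using 1 by simp
    next
      case False
      have "x @ (u @ y @ v @ z) = (u0 @ v0) @ (u0 @ v0)" using w by simp
      then obtain x0 where "x = (u0 @ v0) @ x0" using prefix_split False by (metis length_append not_less)
      then have "x @ y @ z = u0 @ v0 @ (x0 @ y @ z)" by simp
      then show ?thesis using preA preB by blast
    qed
  qed
qed



datatype 't tree = Lf 't | Nd nat "'t tree list"

fun root :: "'t tree \<Rightarrow> (nat,'t) sym" where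
  "root (Lf a) = Tm a" | "root (Nd X ts) = NT X"

fun yld :: "'t tree \<Rightarrow> 't list" where
  "yld (Lf a) = [a]" | "yld (Nd X ts) = concat (map yld ts)"

fun wft :: "'t cfg_prods \<Rightarrow> 't tree \<Rightarrow> bool" where
  "wft P (Lf a) = True"
| "wft P (Nd X ts) = ((X, map root ts) \<in> P \<and> (\<forall>t\<in>set ts. wft P t))"

fun tsz :: "'t tree \<Rightarrow> nat" where
  "tsz (Lf a) = 1" | "tsz (Nd X ts) = Suc (sum_list (map tsz ts))"

fun labs :: "'t tree \<Rightarrow> nat set" where
  "labs (Lf a) = {}" | "labs (Nd X ts) = insert X (\<Union>t\<in>set ts. labs t)"

lemma derive1_ctx: "derive1 P u v \<Longrightarrow> derive1 P (x @ u @ y) (x @ v @ y)"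
  unfolding derive1_def by (metis append.assoc)

lemma derives_ctx: "(derive1 P)\<^sup>*\<^sup>* u v \<Longrightarrow> (derive1 P)\<^sup>*\<^sup>* (x @ u @ y) (x @ v @ y)"
  by (induct rule: rtranclp_induct) (auto intro: rtranclp.rtrancl_into_rtrancl derive1_ctx)

lemma derives_app: "(derive1 P)\<^sup>*\<^sup>* u1 v1 \<Longrightarrow> (derive1 P)\<^sup>*\<^sup>* u2 v2 \<Longrightarrow> (derive1 P)\<^sup>*\<^sup>* (u1 @ u2) (v1 @ v2)"
proof -
  assume a: "(derive1 P)\<^sup>*\<^sup>* u1 v1" "(derive1 P)\<^sup>*\<^sup>* u2 v2"
  have "(derive1 P)\<^sup>*\<^sup>* (u1 @ u2) (v1 @ u2)" using derives_ctx[OF a(1), of "[]" u2] by simp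
  moreover have "(derive1 P)\<^sup>*\<^sup>* (v1 @ u2) (v1 @ v2)" using derives_ctx[OF a(2), of v1 "[]"] by simp
  ultimately show ?thesis by (rule rtranclp_trans)
qed

lemma forest_derives: "(\<forall>t\<in>set ts. (derive1 P)\<^sup>*\<^sup>* [root t] (map Tm (yld t))) \<Longrightarrow>
   (derive1 P)\<^sup>*\<^sup>* (map root ts) (map Tm (concat (map yld ts)))"
proof (induction ts)
  case (Cons t ts)
  then show ?case using derives_app[of P "[root t]" "map Tm (yld t)"] by simp
qed simp

lemma tree_derives: "wft P t \<Longrightarrow> (derive1 P)\<^sup>*\<^sup>* [root t] (map Tm (yld t))"
proof (induction t)
  case (Lf a) then show ?case by simp
next
  case (Nd X ts)
  have f: "(derive1 P)\<^sup>*\<^sup>* (map root ts) (map Tm (concat (map yld ts)))"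
    using Nd by (intro forest_derives) auto
  have "derive1 P [NT X] (map root ts)" using Nd.prems unfolding derive1_def
    by (metis append_Nil append_Nil2 wft.simps(2))
  then show ?case using f by (simp add: converse_rtranclp_into_rtranclp)
qed

lemma derives_forest: "(derive1 P)\<^sup>*\<^sup>* \<alpha> (map Tm w) \<Longrightarrow>
  \<exists>ts. map root ts = \<alpha> \<and> (\<forall>t\<in>set ts. wft P t) \<and> concat (map yld ts) = w"
proof (induction rule: converse_rtranclp_induct)
  case base
  show ?case by (rule exI[of _ "map Lf w"]) (simp add: comp_def)
next
  case (step \<alpha> \<beta>)
  then obtain ts where ts: "map root ts = \<beta>" "\<forall>t\<in>set ts. wft P t" "concat (map yld ts) = w" by blast
  from step(1) obtain l r X \<gamma> where d: "(X,\<gamma>) \<in> P" "\<alpha> = l @ [NT X] @ r" "\<beta> = l @ \<gamma> @ r"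
    unfolding derive1_def by blast
  from ts(1) d(3) obtain ts1 ts2 ts3 where s: "ts = ts1 @ ts2 @ ts3" "map root ts1 = l"
    "map root ts2 = \<gamma>" "map root ts3 = r"
  proof -
    have "map root ts = l @ (\<gamma> @ r)" using ts(1) d(3) by simp
    from map_eq_append_conv[THEN iffD1, OF this] obtain us vs where 1: "ts = us @ vs" "l = map root us" "\<gamma> @ r = map root vs"
      by blast
    from map_eq_append_conv[THEN iffD1, OF 1(3)[symmetric]] obtain vs1 vs2 where 2: "vs = vs1 @ vs2" "\<gamma> = map root vs1" "r = map root vs2"
      by blast
    show ?thesis using 1 2 that by simp
  qed
  show ?case
    apply (rule exI[of _ "ts1 @ [Nd X ts2] @ ts3"])
    using s ts d by auto
qed

lemma lang_tree: "w \<in> cfg_lang P S \<longleftrightarrow> (\<exists>t. wft P t \<and> root t = NT S \<and> yld t = w)"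
proof
  assume "w \<in> cfg_lang P S"
  then have "(derive1 P)\<^sup>*\<^sup>* [NT S] (map Tm w)" by (simp add: cfg_lang_def)
  from derives_forest[OF this] obtain ts where ts: "map root ts = [NT S]" "\<forall>t\<in>set ts. wft P t" "concat (map yld ts) = w"
    by (elim exE conjE) (rule that)
  then obtain t where "ts = [t]" by (cases ts) auto
  then show "\<exists>t. wft P t \<and> root t = NT S \<and> yld t = w" using ts by (intro exI[of _ t]) auto
next
  assume "\<exists>t. wft P t \<and> root t = NT S \<and> yld t = w"
  then obtain t where "wft P t" "root t = NT S" "yld t = w" by blast
  then show "w \<in> cfg_lang P S" using tree_derives[of P t] unfolding cfg_lang_def by simp
qed


inductive occ :: "'t tree \<Rightarrow> 't tree \<Rightarrow> 't list \<Rightarrow> 't list \<Rightarrow> bool" where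
  occ_refl: "occ t t [] []"
| occ_step: "occ t s x z \<Longrightarrow> occ (Nd X (ts1 @ t # ts2)) s (concat (map yld ts1) @ x) (z @ concat (map yld ts2))"

lemma occ_yld: "occ t s x z \<Longrightarrow> yld t = x @ yld s @ z"
  by (induct rule: occ.induct) auto

lemma occ_trans: "occ t s x z \<Longrightarrow> occ s r x' z' \<Longrightarrow> occ t r (x @ x') (z' @ z)"
  by (induct rule: occ.induct) (auto dest: occ_step)

lemma occ_wft: "occ t s x z \<Longrightarrow> wft P t \<Longrightarrow> wft P s"
  by (induct rule: occ.induct) auto

lemma occ_tsz: "occ t s x z \<Longrightarrow> tsz s \<le> tsz t"
  by (induct rule: occ.induct) auto

lemma occ_tsz_less: "occ t s x z \<Longrightarrow> s = t \<or> tsz s < tsz t"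
proof (induct rule: occ.induct)
  case (occ_step t s x z X ts1 ts2)
  then show ?case using occ_tsz[OF occ_step(1)] by auto
qed simp

lemma occ_labs: "occ t s x z \<Longrightarrow> labs s \<subseteq> labs t"
  by (induct rule: occ.induct) auto

lemma occ_child: "c \<in> set ts \<Longrightarrow> \<exists>x z. occ (Nd X ts) c x z"
proof -
  assume "c \<in> set ts"
  then obtain ts1 ts2 where "ts = ts1 @ c # ts2" by (meson split_list)
  then show ?thesis using occ_step[OF occ_refl[of c], of X ts1 ts2] by auto
qed

lemma occ_Lf: "occ (Lf a) s x z \<Longrightarrow> s = Lf a"
  by (cases rule: occ.cases) auto

lemma labs_occ: "Y \<in> labs t \<Longrightarrow> \<exists>s x z. occ t s x z \<and> root s = NT Y"
proof (induction t)
  case (Lf a) then show ?case by simp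
next
  case (Nd X ts)
  show ?case
  proof (cases "Y = X")
    case True then show ?thesis using occ_refl[of "Nd X ts"] by (metis root.simps(2))
  next
    case False
    then obtain c where c: "c \<in> set ts" "Y \<in> labs c" using Nd.prems by auto
    then obtain s x z where "occ c s x z" "root s = NT Y" using Nd.IH by blast
    moreover obtain x' z' where "occ (Nd X ts) c x' z'" using occ_child[OF c(1)] by blast
    ultimately show ?thesis using occ_trans by blast
  qed
qed

lemma labs_wft: "wft P t \<Longrightarrow> labs t \<subseteq> fst ` P"
  by (induction t) (auto, force)

lemma finite_labs: "finite (labs t)"
  by (induction t) auto

lemma occ_replace: "occ t s x z \<Longrightarrow> wft P t \<Longrightarrow> wft P s' \<Longrightarrow> root s' = root s \<Longrightarrow>
  \<exists>t'. wft P t' \<and> root t' = root t \<and> yld t' = x @ yld s' @ z \<and> tsz t' + tsz s = tsz t + tsz s'"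
proof (induct rule: occ.induct)
  case (occ_refl t)
  then show ?case by (intro exI[of _ s']) auto
next
  case (occ_step t s x z X ts1 ts2)
  then obtain t' where t': "wft P t'" "root t' = root t" "yld t' = x @ yld s' @ z" "tsz t' + tsz s = tsz t + tsz s'"
    by auto
  show ?case
    apply (rule exI[of _ "Nd X (ts1 @ t' # ts2)"])
    using occ_step.prems t' by auto
qed

lemma tsz_child: "c \<in> set ts \<Longrightarrow> tsz c < tsz (Nd X ts)"
proof -
  assume "c \<in> set ts"
  then have "tsz c \<le> sum_list (map tsz ts)" by (simp add: member_le_sum_list)
  then show ?thesis by simp
qed

definition rep :: "'t tree \<Rightarrow> bool" where
  "rep a \<longleftrightarrow> (\<exists>b c x z x' z'. occ a b x z \<and> occ b c x' z' \<and> c \<noteq> b \<and> root c = root b)"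

lemma rep_mono: "occ t a x z \<Longrightarrow> rep a \<Longrightarrow> rep t"
  unfolding rep_def by (meson occ_trans)

lemma sum_list_bound: "(\<forall>t\<in>set ts. f t \<le> (c::nat)) \<Longrightarrow> sum_list (map f ts) \<le> length ts * c"
  by (induction ts) auto

lemma norep_bound:
  assumes m: "\<forall>(X,\<alpha>)\<in>P. length \<alpha> \<le> m" "m \<ge> 1"
  shows "wft P t \<Longrightarrow> \<not> rep t \<Longrightarrow> length (yld t) \<le> m ^ card (labs t)"
proof (induction t)
  case (Lf a) then show ?case by simp
next
  case (Nd X ts)
  let ?k = "card (labs (Nd X ts))"
  have k: "?k \<ge> 1" using finite_labs[of "Nd X ts"] by (simp add: card_gt_0_iff Suc_le_eq)
  have ch: "length (yld c) \<le> m ^ (?k - 1)" if c: "c \<in> set ts" for c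
  proof -
    obtain x z where oc: "occ (Nd X ts) c x z" using occ_child[OF c] by blast
    have nr: "\<not> rep c" using rep_mono[OF oc] Nd.prems(2) by blast
    have "X \<notin> labs c"
    proof
      assume "X \<in> labs c"
      then obtain s x' z' where os: "occ c s x' z'" "root s = NT X" using labs_occ by blast
      have "tsz s < tsz (Nd X ts)" using occ_tsz[OF os(1)] tsz_child[OF c] by simp
      then have "rep (Nd X ts)" unfolding rep_def
        using occ_refl[of "Nd X ts"] occ_trans[OF oc os(1)] os(2) by fastforce
      then show False using Nd.prems(2) by blast
    qed
    then have "labs c \<subset> labs (Nd X ts)" using c by auto
    then have "card (labs c) < ?k"
      by (rule psubset_card_mono[OF finite_labs])
    then have "card (labs c) \<le> ?k - 1" by simp
    moreover have "length (yld c) \<le> m ^ card (labs c)" using Nd.IH[OF c] Nd.prems nr c by auto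
    ultimately show ?thesis using m(2) by (meson le_trans power_increasing)
  qed
  have "length (yld (Nd X ts)) = sum_list (map (\<lambda>c. length (yld c)) ts)"
    by (simp add: length_concat comp_def)
  also have "\<dots> \<le> length ts * m ^ (?k - 1)" using ch by (intro sum_list_bound) auto
  also have "\<dots> \<le> m * m ^ (?k - 1)" using m(1) Nd.prems(1) by auto
  also have "\<dots> = m ^ ?k" using k by (metis Suc_diff_le diff_Suc_1 power_Suc)
  finally show ?case .
qed


lemma rep_bound:
  assumes m: "\<forall>(X,\<alpha>)\<in>P. length \<alpha> \<le> m" "m \<ge> 1" and N: "finite N" "labs t \<subseteq> N"
    and wt: "wft P t" and big: "length (yld t) > m ^ card N"
  shows "\<exists>a x z b x' z'. occ t a x z \<and> occ a b x' z' \<and> b \<noteq> a \<and> root b = root a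
     \<and> length (yld a) \<le> m ^ Suc (card N)"
proof -
  have "rep t"
  proof (rule ccontr)
    assume "\<not> rep t"
    then have "length (yld t) \<le> m ^ card (labs t)" using norep_bound[OF m wt] by blast
    also have "\<dots> \<le> m ^ card N" using m(2) card_mono[OF N] by (simp add: power_increasing)
    finally show False using big by simp
  qed
  define Q where "Q a \<longleftrightarrow> (\<exists>x z. occ t a x z) \<and> rep a" for a
  have "Q t" unfolding Q_def using occ_refl[of t] \<open>rep t\<close> by blast
  from ex_has_least_nat[of Q t tsz, OF this] obtain a where
    a: "Q a" "\<And>y. Q y \<Longrightarrow> tsz a \<le> tsz y" by blast
  from a(1) obtain x z where ota: "occ t a x z" and ra: "rep a" unfolding Q_def by blast
  from ra obtain b c x1 z1 x2 z2 where bc: "occ a b x1 z1" "occ b c x2 z2" "c \<noteq> b" "root c = root b"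
    unfolding rep_def by blast
  have "b = a"
  proof (rule ccontr)
    assume "b \<noteq> a"
    then have "tsz b < tsz a" using occ_tsz_less[OF bc(1)] by simp
    moreover have "Q b" unfolding Q_def rep_def using occ_trans[OF ota bc(1)] occ_refl[of b] bc(2-4) by blast
    ultimately show False using a(2) by fastforce
  qed
  then have bc': "occ a c x2 z2" "c \<noteq> a" "root c = root a" using bc by auto
  obtain X ts where aN: "a = Nd X ts" using bc' occ_Lf by (cases a) auto
  have ch: "length (yld ch) \<le> m ^ card N" if ch: "ch \<in> set ts" for ch
  proof -
    obtain x' z' where och: "occ a ch x' z'" using occ_child[OF ch] aN by blast
    have "tsz ch < tsz a" using tsz_child[OF ch] aN by simp
    then have "\<not> Q ch" using a(2) by fastforce
    then have "\<not> rep ch" unfolding Q_def using occ_trans[OF ota och] by blast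
    moreover have "wft P ch" using occ_wft[OF occ_trans[OF ota och] wt] .
    ultimately have "length (yld ch) \<le> m ^ card (labs ch)" using norep_bound[OF m] by blast
    also have "\<dots> \<le> m ^ card N" using m(2) card_mono[OF N(1)] occ_labs[OF occ_trans[OF ota och]] N(2)
      by (meson order_trans power_increasing)
    finally show ?thesis .
  qed
  have "length (yld a) = sum_list (map (\<lambda>c. length (yld c)) ts)"
    using aN by (simp add: length_concat comp_def)
  also have "\<dots> \<le> length ts * m ^ card N" using ch by (intro sum_list_bound) auto
  also have "\<dots> \<le> m * m ^ card N" using m(1) occ_wft[OF ota wt] aN by auto
  finally have "length (yld a) \<le> m ^ Suc (card N)" by simp
  then show ?thesis using ota bc' by blast
qed

lemma pumping:
  assumes "finite P"
  shows "\<exists>p. \<forall>w \<in> cfg_lang P S. length w > p \<longrightarrow>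
    (\<exists>x u y v z. w = x @ u @ y @ v @ z \<and> u @ v \<noteq> [] \<and> length (u @ y @ v) \<le> p \<and> x @ y @ z \<in> cfg_lang P S)"
proof -
  define m where "m = Max (insert 1 ((\<lambda>(X,\<alpha>). length \<alpha>) ` P))"
  have fin: "finite (insert 1 ((\<lambda>(X,\<alpha>). length \<alpha>) ` P))" using assms by simp
  have m1: "length \<alpha> \<le> m" if "(X,\<alpha>) \<in> P" for X \<alpha>
    unfolding m_def by (rule Max_ge[OF fin]) (use that in force)
  have m: "\<forall>(X,\<alpha>)\<in>P. length \<alpha> \<le> m" "m \<ge> 1"
    using m1 apply blast
    unfolding m_def by (rule Max_ge[OF fin]) simp
  define N where "N = fst ` P"
  have N: "finite N" using assms unfolding N_def by simp
  show ?thesis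
  proof (intro exI[of _ "m ^ Suc (card N)"] ballI impI)
    fix w assume w: "w \<in> cfg_lang P S" "length w > m ^ Suc (card N)"
    define R where "R t \<longleftrightarrow> wft P t \<and> root t = NT S \<and> yld t = w" for t
    obtain t0 where "R t0" using w(1) lang_tree unfolding R_def by blast
    from ex_has_least_nat[of R t0 tsz, OF this] obtain t where
      t: "R t" "\<And>y. R y \<Longrightarrow> tsz t \<le> tsz y" by blast
    have wt: "wft P t" using t(1) unfolding R_def by simp
    have "m ^ card N \<le> m ^ Suc (card N)" using m(2) by (simp add: power_increasing)
    moreover have "yld t = w" using t(1) unfolding R_def by simp
    ultimately have big: "length (yld t) > m ^ card N" using w(2) by (metis le_less_trans)
    from rep_bound[OF m N labs_wft[OF wt, folded N_def] wt big] obtain a x z b x' z' where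
      ab: "occ t a x z" "occ a b x' z'" "b \<noteq> a" "root b = root a" "length (yld a) \<le> m ^ Suc (card N)"
      by blast
    have wa: "wft P a" "wft P b" using occ_wft ab wt by blast+
    obtain t' where t': "wft P t'" "root t' = root t" "yld t' = x @ yld b @ z" "tsz t' + tsz a = tsz t + tsz b"
      using occ_replace[OF ab(1) wt wa(2) ab(4)] by blast
    have "tsz b < tsz a" using occ_tsz_less[OF ab(2)] ab(3) by simp
    then have "tsz t' < tsz t" using t'(4) by simp
    have ya: "yld a = x' @ yld b @ z'" using occ_yld[OF ab(2)] .
    have wd: "w = x @ x' @ yld b @ z' @ z" using occ_yld[OF ab(1)] ya t(1) unfolding R_def by simp
    have "x' @ z' \<noteq> []"
    proof
      assume "x' @ z' = []"
      then have "R t'" using t' t(1) wd unfolding R_def by simp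
      then show False using t(2) \<open>tsz t' < tsz t\<close> by fastforce
    qed
    moreover have "x @ yld b @ z \<in> cfg_lang P S" using lang_tree t' t(1) unfolding R_def by metis
    moreover have "length (x' @ yld b @ z') \<le> m ^ Suc (card N)" using ab(5) ya by simp
    ultimately show "\<exists>x u y v z. w = x @ u @ y @ v @ z \<and> u @ v \<noteq> [] \<and> length (u @ y @ v) \<le> m ^ Suc (card N) \<and> x @ y @ z \<in> cfg_lang P S"
      using wd by blast
  qed
qed



lemma classmin:
  assumes fA: "finite A" and eq: "equiv (lists A) \<rho>" and inf: "infinite (lists A // \<rho>)"
  shows "\<exists>u0 \<in> lists A. length u0 > p \<and> (\<forall>u. (u, u0) \<in> \<rho> \<longrightarrow> length u0 \<le> length u)"
proof -
  define F where "F = {w. set w \<subseteq> A \<and> length w \<le> p}"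
  have "finite F" unfolding F_def using finite_lists_length_le[OF fA] by simp
  then have "finite ((\<lambda>w. \<rho> `` {w}) ` F)" by simp
  then obtain C where C: "C \<in> lists A // \<rho>" "C \<notin> (\<lambda>w. \<rho> `` {w}) ` F"
    using inf by (metis finite_subset subsetI)
  then obtain u' where u': "u' \<in> lists A" "C = \<rho> `` {u'}" using C(1) unfolding quotient_def by blast
  have "u' \<in> C" using u' eq unfolding equiv_def refl_on_def by blast
  from ex_has_least_nat[of "\<lambda>u. u \<in> C" u' length, OF this] obtain u0 where
    u0: "u0 \<in> C" "\<And>u. u \<in> C \<Longrightarrow> length u0 \<le> length u" by blast
  have r: "(u', u0) \<in> \<rho>" using u0(1) u' by simp
  have u0A: "u0 \<in> lists A" using r eq unfolding equiv_def refl_on_def by blast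
  have Ceq: "C = \<rho> `` {u0}" using u'(2) equiv_class_eq[OF eq r] by simp
  have "length u0 > p"
  proof (rule ccontr)
    assume "\<not> p < length u0"
    then have "u0 \<in> F" using u0A unfolding F_def by auto
    then show False using C(2) Ceq by blast
  qed
  moreover have "length u0 \<le> length u" if "(u, u0) \<in> \<rho>" for u
  proof -
    have "(u0, u) \<in> \<rho>" using that eq unfolding equiv_def by (meson symE)
    then have "u \<in> C" using Ceq by simp
    then show ?thesis using u0(2) by blast
  qed
  ultimately show ?thesis using u0A by blast
qed

theorem mainTheorem5:
  fixes A B :: "'a set" and \<rho>A \<rho>B :: "('a list \<times> 'a list) set"
  assumes "finite A" and "finite B" and "A \<inter> B = {}"
    and "equiv (lists A) \<rho>A" and "equiv (lists B) \<rho>B"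
    and "infinite (lists A // \<rho>A)" and "infinite (lists B // \<rho>B)"
  shows "\<not> context_free (L_rho \<rho>A \<rho>B)"
proof
  assume "context_free (L_rho \<rho>A \<rho>B)"
  then obtain P S where PS: "finite P" "cfg_lang P S = L_rho \<rho>A \<rho>B" unfolding context_free_def by blast
  from pumping[OF PS(1), of S] obtain p where p: "\<forall>w \<in> cfg_lang P S. length w > p \<longrightarrow>
    (\<exists>x u y v z. w = x @ u @ y @ v @ z \<and> u @ v \<noteq> [] \<and> length (u @ y @ v) \<le> p \<and> x @ y @ z \<in> cfg_lang P S)"
    by blast
  obtain u0 where u0: "u0 \<in> lists A" "length u0 > p" "\<And>u. (u, u0) \<in> \<rho>A \<Longrightarrow> length u0 \<le> length u"
    using classmin[OF assms(1,4,6), of p] by blast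
  obtain v0 where v0: "v0 \<in> lists B" "length v0 > p" "\<And>u. (u, v0) \<in> \<rho>B \<Longrightarrow> length v0 \<le> length u"
    using classmin[OF assms(2,5,7), of p] by blast
  have rA: "\<rho>A \<subseteq> lists A \<times> lists A" and rB: "\<rho>B \<subseteq> lists B \<times> lists B"
    using assms(4,5) unfolding equiv_def refl_on_def by auto
  have "(u0, u0) \<in> \<rho>A" using u0(1) assms(4) unfolding equiv_def refl_on_def by blast
  moreover have "(v0, v0) \<in> \<rho>B" using v0(1) assms(5) unfolding equiv_def refl_on_def by blast
  ultimately have wL: "u0 @ v0 @ u0 @ v0 \<in> cfg_lang P S" unfolding PS(2) L_rho_def by blast
  have wl: "length (u0 @ v0 @ u0 @ v0) > p" using u0(2) by simp
  from p[rule_format, OF wL wl] obtain x u y v z where xu: "u0 @ v0 @ u0 @ v0 = x @ u @ y @ v @ z" "u @ v \<noteq> []"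
    "length (u @ y @ v) \<le> p" "x @ y @ z \<in> cfg_lang P S"
    by blast
  from xu(4) obtain u1 u2 v1 v2 where w': "x @ y @ z = u1 @ v1 @ u2 @ v2" "(u1, u2) \<in> \<rho>A" "(v1, v2) \<in> \<rho>B"
    unfolding PS(2) L_rho_def by blast
  have s: "set u1 \<subseteq> A" "set v1 \<subseteq> B" "set u2 \<subseteq> A" "set v2 \<subseteq> B"
    using w'(2,3) rA rB by auto
  have c: "(u1 = u0 \<or> u2 = u0) \<and> (v1 = v0 \<or> v2 = v0)"
    using comb[OF assms(3) _ _ u0(2) v0(2) xu(1) xu(3) w'(1) s] u0(1) v0(1) by auto
  have symA: "(b, a) \<in> \<rho>A" if "(a, b) \<in> \<rho>A" for a b
    using that assms(4) unfolding equiv_def by (meson symE)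
  have symB: "(b, a) \<in> \<rho>B" if "(a, b) \<in> \<rho>B" for a b
    using that assms(5) unfolding equiv_def by (meson symE)
  have "length u1 \<ge> length u0 \<and> length u2 \<ge> length u0"
    using c w'(2) u0(3) symA by auto
  moreover have "length v1 \<ge> length v0 \<and> length v2 \<ge> length v0"
    using c w'(3) v0(3) symB by auto
  moreover have "length (x @ y @ z) < length (u0 @ v0 @ u0 @ v0)"
    using xu(1,2) by simp
  ultimately show False using w'(1) by simp
qed

end
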